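(* Let $N\ge3$, $1<k<N-1$ and $0<p<\frac{N-1}{k-1}$. Define $\gamma_0=k-1$ and $\gamma_{n+1}=p\gamma_n+k-N$ for $n\ge0$. Then: (i) $(\gamma_n)_{n\ge0}$ is decreasing, and $\lim_{n\to\infty}\gamma_n=\frac{N-k}{p-1}$ if $0<p<1$, while $\lim_{n\to\infty}\gamma_n=-\infty$ if $1\le p<\frac{N-1}{k-1}$. (ii) Let $c>0$ and let $v:\mathbb R^{N-1}\to[0,\infty]$ be measurable with $0<v<\infty$ a.e. and $v(x')\ge c\int_{\mathbb R^{N-1}}\frac{v(y')^p}{|x'-y'|^{k-1}}dy'$ for a.e. $x'\in\mathbb R^{N-1}$. Then for every $n\ge0$ with $\gamma_n>0$ there exists $C_n>0$ such that $v(x')\ge C_n|x'|^{-\gamma_n}$ for a.e. $x'\in\mathbb R^{N-1}$ with $|x'|>1$. *)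

theory Defs
  imports "HOL-Analysis.Analysis"
begin

fun gam :: "real \<Rightarrow> real \<Rightarrow> real \<Rightarrow> nat \<Rightarrow> real" where
  "gam N k p 0 = k - 1"
| "gam N k p (Suc n) = p * gam N k p n + k - N"

definition ennpowr :: "ennreal \<Rightarrow> real \<Rightarrow> ennreal" where
  "ennpowr x p = (if x = \<infinity> then \<infinity> else ennreal (enn2real x powr p))"

end

theory Submission
  imports Defs "HOL-Real_Asymp.Real_Asymp"
begin


lemma gam_diff: "gam N k p (Suc n) - gam N k p n = p ^ n * (gam N k p 1 - gam N k p 0)"
proof (induction n)
  case 0 then show ?case by simp
next
  case (Suc n)
  have "gam N k p (Suc (Suc n)) - gam N k p (Suc n) = p * (gam N k p (Suc n) - gam N k p n)"
    by (simp add: algebra_simps)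
  also have "\<dots> = p ^ Suc n * (gam N k p 1 - gam N k p 0)" using Suc by simp
  finally show ?case .
qed

lemma gam_fix: "gam N k p n - (N - k) / (p - 1) = p ^ n * (gam N k p 0 - (N - k) / (p - 1))"
  if "p \<noteq> 1"
proof (induction n)
  case 0 then show ?case by simp
next
  case (Suc n)
  have "gam N k p (Suc n) - (N - k) / (p - 1) = p * (gam N k p n - (N - k) / (p - 1))"
    using that by (simp add: field_simps)
  then show ?case using Suc by simp
qed

lemma gam_dec:
  assumes "0 < p" "gam N k p 1 < gam N k p 0"
  shows "gam N k p (Suc n) < gam N k p n"
proof -
  have "p ^ n * (gam N k p 1 - gam N k p 0) < 0"
    using assms by (intro mult_pos_neg) auto
  then show ?thesis using gam_diff[of N k p n] by linarith
qed

lemma gam_lim1: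
  assumes "0 < p" "p < 1"
  shows "gam N k p \<longlonglongrightarrow> (N - k) / (p - 1)"
proof -
  have "(\<lambda>n. p ^ n * (gam N k p 0 - (N - k) / (p - 1))) \<longlonglongrightarrow> 0 * (gam N k p 0 - (N - k) / (p - 1))"
    by (intro tendsto_mult tendsto_const LIMSEQ_power_zero) (use assms in auto)
  then have "(\<lambda>n. gam N k p n - (N - k) / (p - 1)) \<longlonglongrightarrow> 0"
    using gam_fix[of p N k] assms by simp
  then show ?thesis by (simp add: LIM_zero_iff)
qed

lemma gam_lim2:
  assumes "1 \<le> p" "gam N k p 1 < gam N k p 0"
  shows "filterlim (gam N k p) at_bot sequentially"
proof -
  define d where "d = gam N k p 0 - gam N k p 1"
  have d: "d > 0" using assms by (simp add: d_def)
  have le: "gam N k p n \<le> gam N k p 0 - real n * d" for n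
  proof (induction n)
    case 0 then show ?case by simp
  next
    case (Suc n)
    have "p ^ n * d \<ge> 1 * d" using assms d by (intro mult_right_mono one_le_power) auto
    then have "gam N k p (Suc n) \<le> gam N k p n - d"
      using gam_diff[of N k p n] by (simp add: d_def algebra_simps)
    then show ?case using Suc by (simp add: algebra_simps)
  qed
  have "filterlim (\<lambda>n. gam N k p 0 - real n * d) at_bot sequentially"
    using d by real_asymp
  then show ?thesis
    by (rule filterlim_at_bot_mono) (use le in auto)
qed



lemma ennpowr_mono:
  assumes "0 \<le> a" "ennreal a \<le> x" "0 < p"
  shows "ennreal (a powr p) \<le> ennpowr x p"
proof (cases "x = \<infinity>")
  case True then show ?thesis by (simp add: ennpowr_def)
next
  case False
  then have "enn2real (ennreal a) \<le> enn2real x" using assms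
    by (intro enn2real_mono) (auto simp: top.not_eq_extremum)
  then have "a \<le> enn2real x" using assms by simp
  then have "a powr p \<le> enn2real x powr p" using assms by (intro powr_mono2) auto
  then show ?thesis using False by (simp add: ennpowr_def)
qed

lemma ennpowr_pos:
  assumes "0 < x" "x < \<infinity>"
  shows "0 < ennpowr x p"
proof -
  have "0 < enn2real x" using assms by (simp add: enn2real_positive_iff)
  then show ?thesis using assms by (simp add: ennpowr_def)
qed

lemma ennpowr_meas[measurable]:
  assumes [measurable]: "f \<in> borel_measurable M"
  shows "(\<lambda>x. ennpowr (f x) p) \<in> borel_measurable M"
  unfolding ennpowr_def by measurable

lemma div_bound:
  fixes e :: ennreal
  assumes "0 < d" "d \<le> D"
  shows "e * ennreal (1 / D) \<le> e / ennreal d"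
proof -
  have "e / ennreal d = e * ennreal (1 / d)"
    using assms unfolding divide_ennreal_def by (simp add: inverse_ennreal divide_inverse)
  moreover have "ennreal (1 / D) \<le> ennreal (1 / d)"
    using assms by (intro ennreal_leI) (simp add: frac_le)
  ultimately show ?thesis by (simp add: mult_left_mono)
qed



lemma ac6: "(c::real) * (q * (a * X) * (b * Y) * (w * (h * Z))) = (c * q * a * b * w * h) * (X * Y * Z)"
  by (simp only: ac_simps)

lemma ident:
  fixes r c Cn p G G1 k w :: real and N :: nat
  assumes r0: "r > 0" and N3: "N \<ge> 3" and gS: "G1 = p * G + k - real N"
  shows "c * (Cn powr p * (5 * r / 2) powr (-(p * G)) * (1 / (3 * r / 2) powr (k-1)) * (w * (r / 2) ^ (N - 1)))
    = (c * Cn powr p * (5/2) powr (-(p * G)) * (3/2) powr (-(k-1)) * w * (1/2) ^ (N-1)) * r powr (- G1)"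
proof -
  have e1: "(5 * r / 2) powr (-(p * G)) = (5/2) powr (-(p * G)) * r powr (-(p * G))"
    using r0 by (subst powr_mult[symmetric]) auto
  have e2: "1 / (3 * r / 2) powr (k-1) = (3/2) powr (-(k-1)) * r powr (-(k-1))"
  proof -
    have "(3 * r / 2) powr (-(k-1)) = (3/2) powr (-(k-1)) * r powr (-(k-1))"
      using r0 by (subst powr_mult[symmetric]) auto
    moreover have "(3 * r / 2) powr (-(k-1)) = 1 / (3 * r / 2) powr (k-1)"
      by (rule powr_minus_divide)
    ultimately show ?thesis by simp
  qed
  have e3: "(r / 2) ^ (N - 1) = (1/2) ^ (N - 1) * r powr (real N - 1)"
  proof -
    have "r powr (real (N - 1)) = r ^ (N - 1)" using r0 by (rule powr_realpow)
    moreover have "real (N - 1) = real N - 1" using N3 by simp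
    moreover have "(r / 2) ^ (N - 1) = (1/2) ^ (N - 1) * r ^ (N - 1)"
      by (subst power_mult_distrib[symmetric]) simp
    ultimately show ?thesis by simp
  qed
  have e4: "r powr (-(p * G)) * r powr (-(k-1)) * r powr (real N - 1) = r powr (- G1)"
  proof -
    have "-(p * G) + -(k-1) + (real N - 1) = - G1" using gS by simp
    then show ?thesis by (simp only: powr_add[symmetric])
  qed
  show ?thesis
    unfolding e1 e2 e3 e4[symmetric] by (rule ac6)
qed


lemma part2:
  fixes v :: "real^'n::finite \<Rightarrow> ennreal" and c k p :: real and N :: nat and g :: "nat \<Rightarrow> real"
  assumes N3: "N \<ge> 3" and dim: "CARD('n) = N - 1" and k1: "1 < k" and p0: "0 < p"
    and gdec: "\<And>n. g (Suc n) < g n" and g0: "g 0 = k - 1"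
    and gS: "\<And>n. g (Suc n) = p * g n + k - real N"
    and c: "c > 0" and vm[measurable]: "v \<in> borel_measurable lborel"
    and vpos: "AE x in lborel. 0 < v x \<and> v x < \<infinity>"
    and vint: "AE x in lborel. v x \<ge> ennreal c *
               (\<integral>\<^sup>+ y. ennpowr (v y) p / ennreal (norm (x - y) powr (k - 1)) \<partial>lborel)"
  shows "g n > 0 \<Longrightarrow> (\<exists>C>0. AE x in lborel. norm x > 1 \<longrightarrow> v x \<ge> ennreal (C * norm x powr (- g n)))"
proof -
  have vb[measurable]: "v \<in> borel_measurable borel" using vm by simp
  define K where "K x = (\<integral>\<^sup>+ y. ennpowr (v y) p / ennreal (norm (x - y) powr (k - 1)) \<partial>lborel)" for x
  have fin: "AE x in lborel. norm x > 1 \<longrightarrow> v x \<ge> ennreal (C * norm x powr (- G))"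
    if "\<And>x. norm x > 1 \<Longrightarrow> ennreal (C * norm x powr (- G)) \<le> ennreal c * K x" for C G
    using vint by eventually_elim (use that in \<open>auto simp: K_def intro: order_trans\<close>)
  show "g n > 0 \<Longrightarrow> (\<exists>C>0. AE x in lborel. norm x > 1 \<longrightarrow> v x \<ge> ennreal (C * norm x powr (- g n)))"
  proof (induction n)
  case 0
  define I where "I = (\<integral>\<^sup>+ y. ennpowr (v y) p * indicator (ball 0 1) y \<partial>lborel)"
  have Ipos: "I > 0"
  proof (rule ccontr)
    assume "\<not> I > 0"
    then have "I = 0" by (simp add: zero_less_iff_neq_zero)
    then have "AE y in lborel. ennpowr (v y) p * indicator (ball 0 1) y = 0"
      unfolding I_def by (subst (asm) nn_integral_0_iff_AE) (measurable, auto)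
    then have "AE y in lborel. y \<notin> ball (0::real^'n) 1"
      using vpos by eventually_elim (auto dest: ennpowr_pos[where p=p])
    moreover have eq: "{x \<in> space lborel. \<not> x \<notin> ball (0::real^'n) 1} = ball 0 1" by auto
    ultimately have "emeasure lborel (ball (0::real^'n) 1) = 0"
      by (subst (asm) AE_iff_measurable[OF _ eq]) auto
    moreover have "emeasure lborel (ball (0::real^'n) 1) > 0"
      by (simp add: emeasure_ball)
    ultimately show False by simp
  qed
  obtain z where z: "0 < z" "z < I" using dense[OF Ipos] by blast
  have zfin: "z \<noteq> \<infinity>" using less_le_trans[OF z(2) top_greatest[of I]] by simp
  define a where "a = enn2real z"
  have a: "0 < a" "ennreal a \<le> I" using z zfin by (auto simp: a_def enn2real_positive_iff top.not_eq_extremum ennreal_enn2real_if)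
  define C where "C = c * a * 2 powr (-(k-1))"
  have "ennreal (C * norm x powr (- g 0)) \<le> ennreal c * K x" if x: "norm x > 1" for x
  proof -
    let ?r = "norm x"
    have "(\<integral>\<^sup>+ y. ennpowr (v y) p * indicator (ball 0 1) y * ennreal (1 / (2 * ?r) powr (k-1)) \<partial>lborel)
          \<le> K x"
      unfolding K_def
    proof (rule nn_integral_mono)
      fix y :: "real^'n"
      show "ennpowr (v y) p * indicator (ball 0 1) y * ennreal (1 / (2 * ?r) powr (k-1))
            \<le> ennpowr (v y) p / ennreal (norm (x - y) powr (k - 1))"
      proof (cases "y \<in> ball 0 1")
        case True
        then have ny: "norm y < 1" by simp
        have d0: "norm (x - y) > 0" using ny x by (auto)
        have "norm (x - y) \<le> norm x + norm y" by (rule norm_triangle_ineq4)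
        then have "norm (x - y) \<le> 2 * ?r" using ny x by linarith
        then have "norm (x - y) powr (k-1) \<le> (2 * ?r) powr (k-1)"
          using k1 by (intro powr_mono2) auto
        moreover have "norm (x - y) powr (k-1) > 0" using d0 by simp
        ultimately show ?thesis using True by (simp add: div_bound)
      qed simp
    qed
    also have "(\<integral>\<^sup>+ y. ennpowr (v y) p * indicator (ball 0 1) y * ennreal (1 / (2 * ?r) powr (k-1)) \<partial>lborel)
       = I * ennreal (1 / (2 * ?r) powr (k-1))"
      unfolding I_def by (rule nn_integral_multc) (measurable, auto)
    finally have "I * ennreal (1 / (2 * ?r) powr (k-1)) \<le> K x" .
    then have "ennreal a * ennreal (1 / (2 * ?r) powr (k-1)) \<le> K x"
      using a by (meson mult_right_mono order_trans zero_le)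
    then have "ennreal c * (ennreal a * ennreal (1 / (2 * ?r) powr (k-1))) \<le> ennreal c * K x"
      by (simp add: mult_left_mono)
    moreover have "ennreal c * (ennreal a * ennreal (1 / (2 * ?r) powr (k-1)))
        = ennreal (c * (a * (1 / (2 * ?r) powr (k-1))))"
      using c a by (subst ennreal_mult, simp, simp)+ simp
    moreover have "c * (a * (1 / (2 * ?r) powr (k-1))) = C * norm x powr (- g 0)"
    proof -
      have "(2 * ?r) powr (k-1) = 2 powr (k-1) * ?r powr (k-1)" using x by (simp add: powr_mult)
      moreover have "2 powr (-(k-1)) = inverse (2 powr (k-1))" by (rule powr_minus)
      moreover have "?r powr (-(k-1)) = inverse (?r powr (k-1))" by (rule powr_minus)
      ultimately show ?thesis by (simp add: C_def g0 divide_inverse)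
    qed
    ultimately show ?thesis by simp
  qed
  then have "AE x in lborel. norm x > 1 \<longrightarrow> v x \<ge> ennreal (C * norm x powr (- g 0))"
    by (rule fin)
  moreover have "C > 0" using c a by (simp add: C_def)
  ultimately show ?case by blast
next
  case (Suc n)
  have gn: "g n > 0" using Suc.prems gdec[of n] by linarith
  obtain Cn where Cn: "Cn > 0" and
    IH: "AE y in lborel. norm y > 1 \<longrightarrow> v y \<ge> ennreal (Cn * norm y powr (- g n))"
    using Suc.IH[OF gn] by blast
  define w where "w = unit_ball_vol (real CARD('n))"
  have w: "w > 0" by (simp add: w_def)
  define C where "C = c * Cn powr p * (5/2) powr (-(p * g n)) * (3/2) powr (-(k-1)) * w * (1/2) ^ (N-1)"
  have "ennreal (C * norm x powr (- g (Suc n))) \<le> ennreal c * K x" if x: "norm x > 1" for x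
  proof -
    let ?r = "norm x"
    define B where "B = ball (2 *\<^sub>R x) (?r / 2)"
    define A where "A = Cn powr p * (5 * ?r / 2) powr (-(p * g n)) * (1 / (3 * ?r / 2) powr (k-1))"
    have A0: "A \<ge> 0" by (simp add: A_def)
    have "AE y in lborel. ennreal A * indicator B y \<le> ennpowr (v y) p / ennreal (norm (x - y) powr (k - 1))"
      using IH
    proof eventually_elim
      fix y :: "real^'n"
      assume h: "norm y > 1 \<longrightarrow> v y \<ge> ennreal (Cn * norm y powr (- g n))"
      show "ennreal A * indicator B y \<le> ennpowr (v y) p / ennreal (norm (x - y) powr (k - 1))"
      proof (cases "y \<in> B")
        case True
        then have d: "norm (2 *\<^sub>R x - y) < ?r / 2" by (simp add: B_def dist_norm)
        have n2x: "norm (2 *\<^sub>R x) = 2 * ?r" by simp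
        have "norm (2 *\<^sub>R x) \<le> norm y + norm (2 *\<^sub>R x - y)" by (rule norm_triangle_sub)
        then have ny1: "norm y \<ge> 3 * ?r / 2" using d n2x by linarith
        have yy: "y = 2 *\<^sub>R x - (2 *\<^sub>R x - y)" by simp
        have "norm y \<le> norm (2 *\<^sub>R x) + norm (2 *\<^sub>R x - y)"
          by (subst yy, rule norm_triangle_ineq4)
        then have ny2: "norm y \<le> 5 * ?r / 2" using d n2x by linarith
        have xy: "x - y = (2 *\<^sub>R x - y) - x" by (simp add: algebra_simps scaleR_2)
        have "norm (x - y) \<le> norm (2 *\<^sub>R x - y) + norm x" unfolding xy by (rule norm_triangle_ineq4)
        then have dxy1: "norm (x - y) \<le> 3 * ?r / 2" using d by linarith
        have xx: "x = (2 *\<^sub>R x - y) - (x - y)" by (simp add: algebra_simps scaleR_2)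
        have "norm x \<le> norm (2 *\<^sub>R x - y) + norm (x - y)"
          by (subst xx, rule norm_triangle_ineq4)
        then have dxy0: "norm (x - y) > 0" using d x by linarith
        have vy: "v y \<ge> ennreal (Cn * norm y powr (- g n))" using h ny1 x by simp
        have "ennreal ((Cn * norm y powr (- g n)) powr p) \<le> ennpowr (v y) p"
          using vy Cn p0 by (intro ennpowr_mono) auto
        moreover have "(Cn * norm y powr (- g n)) powr p = Cn powr p * norm y powr (-(p * g n))"
          using Cn ny1 x by (simp add: powr_mult powr_powr mult.commute)
        moreover have "norm y powr (-(p * g n)) \<ge> (5 * ?r / 2) powr (-(p * g n))"
          using ny1 ny2 x p0 gn by (intro powr_mono2') (auto simp: mult_pos_pos)
        ultimately have P: "ennreal (Cn powr p * (5 * ?r / 2) powr (-(p * g n))) \<le> ennpowr (v y) p"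
          using Cn by (metis ennreal_leI mult_left_mono powr_ge_zero order_trans)
        have dpos: "norm (x - y) powr (k - 1) > 0" using dxy0 by simp
        have "norm (x - y) powr (k - 1) \<le> (3 * ?r / 2) powr (k - 1)"
          using dxy1 dxy0 k1 by (intro powr_mono2) auto
        then have Q: "ennpowr (v y) p * ennreal (1 / (3 * ?r / 2) powr (k-1))
               \<le> ennpowr (v y) p / ennreal (norm (x - y) powr (k - 1))"
          by (rule div_bound[OF dpos])
        have "ennreal A = ennreal (Cn powr p * (5 * ?r / 2) powr (-(p * g n))) * ennreal (1 / (3 * ?r / 2) powr (k-1))"
          unfolding A_def by (rule ennreal_mult) auto
        also have "\<dots> \<le> ennpowr (v y) p * ennreal (1 / (3 * ?r / 2) powr (k-1))"
          using P by (rule mult_right_mono) simp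
        also note Q
        finally show ?thesis using True by simp
      qed simp
    qed
    then have "(\<integral>\<^sup>+ y. ennreal A * indicator B y \<partial>lborel) \<le> K x"
      unfolding K_def by (rule nn_integral_mono_AE)
    moreover have "(\<integral>\<^sup>+ y. ennreal A * indicator B y \<partial>lborel) = ennreal A * emeasure lborel B"
      by (rule nn_integral_cmult_indicator) (simp add: B_def)
    moreover have "emeasure lborel B = ennreal (w * (?r / 2) ^ (N - 1))"
      using x by (simp add: B_def emeasure_ball w_def dim)
    ultimately have "ennreal A * ennreal (w * (?r / 2) ^ (N - 1)) \<le> K x" by simp
    then have "ennreal c * (ennreal A * ennreal (w * (?r / 2) ^ (N - 1))) \<le> ennreal c * K x"
      by (simp add: mult_left_mono)
    moreover have "ennreal c * (ennreal A * ennreal (w * (?r / 2) ^ (N - 1)))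
        = ennreal (c * (A * (w * (?r / 2) ^ (N - 1))))"
      using c A0 w x by (subst ennreal_mult, simp, simp)+ simp
    moreover have "c * (A * (w * (?r / 2) ^ (N - 1))) = C * norm x powr (- g (Suc n))"
    proof -
      have r0: "?r > 0" using x by linarith
      show ?thesis unfolding A_def C_def by (rule ident[OF r0 N3 gS])
    qed
    ultimately show ?thesis by simp
  qed
  then have "AE x in lborel. norm x > 1 \<longrightarrow> v x \<ge> ennreal (C * norm x powr (- g (Suc n)))"
    by (rule fin)
  moreover have "C > 0" using c Cn w by (simp add: C_def)
  ultimately show ?case by blast
qed
qed

theorem lemma3p2:
  fixes N :: nat and k p :: real
  assumes N3: "N \<ge> 3"
    and dim: "CARD('n::finite) = N - 1"
    and k1: "1 < k" and k2: "k < real N - 1"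
    and p0: "0 < p" and p1: "p < (real N - 1) / (k - 1)"
  shows "(\<forall>n. gam (real N) k p (Suc n) < gam (real N) k p n)
    \<and> (p < 1 \<longrightarrow> (gam (real N) k p \<longlonglongrightarrow> (real N - k) / (p - 1)))
    \<and> (1 \<le> p \<longrightarrow> filterlim (gam (real N) k p) at_bot sequentially)
    \<and> (\<forall>(c::real) (v :: real^'n \<Rightarrow> ennreal).
          c > 0 \<and> v \<in> borel_measurable lborel
          \<and> (AE x in lborel. 0 < v x \<and> v x < \<infinity>)
          \<and> (AE x in lborel. v x \<ge> ennreal c *
               (\<integral>\<^sup>+ y. ennpowr (v y) p / ennreal (norm (x - y) powr (k - 1)) \<partial>lborel))
          \<longrightarrow> (\<forall>n. gam (real N) k p n > 0 \<longrightarrow>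
                (\<exists>C>0. AE x in lborel. norm x > 1 \<longrightarrow>
                    v x \<ge> ennreal (C * norm x powr (- gam (real N) k p n)))))"
proof -
  have g10: "gam (real N) k p 1 < gam (real N) k p 0"
  proof -
    have "p * (k - 1) < real N - 1" using p1 k1 by (simp add: pos_less_divide_eq)
    then show ?thesis by simp
  qed
  have dec: "\<forall>n. gam (real N) k p (Suc n) < gam (real N) k p n"
    using gam_dec[OF p0 g10] by blast
  show ?thesis
  proof (intro conjI impI allI)
    fix n show "gam (real N) k p (Suc n) < gam (real N) k p n" using dec by blast
  next
    assume "p < 1" then show "gam (real N) k p \<longlonglongrightarrow> (real N - k) / (p - 1)"
      using gam_lim1[OF p0] by blast
  next
    assume "1 \<le> p" then show "filterlim (gam (real N) k p) at_bot sequentially"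
      using gam_lim2 g10 by blast
  next
    fix c :: real and v :: "real^'n \<Rightarrow> ennreal" and n
    assume h: "c > 0 \<and> v \<in> borel_measurable lborel
          \<and> (AE x in lborel. 0 < v x \<and> v x < \<infinity>)
          \<and> (AE x in lborel. v x \<ge> ennreal c *
               (\<integral>\<^sup>+ y. ennpowr (v y) p / ennreal (norm (x - y) powr (k - 1)) \<partial>lborel))"
      and gn: "gam (real N) k p n > 0"
    show "\<exists>C>0. AE x in lborel. norm x > 1 \<longrightarrow>
                    v x \<ge> ennreal (C * norm x powr (- gam (real N) k p n))"
      using part2[where v=v and c=c and k=k and p=p and N=N and g="gam (real N) k p" and n=n] N3 dim k1 p0 dec h gn by auto
  qed
qed

end
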